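(* (ZFC.) Let $F$ be any set of functions on $[0,1]$, each of arity $\alpha$ with $0<\alpha\le\omega$ (i.e. with finitely or countably many arguments), such that $|F|\le\mathfrak{c}$. Then $\mathsf{Agg}$ is not generated by $F$ as a $\sigma$-clone: not every aggregation function of finite arity belongs to the $\sigma$-clone generated by $F$.
   Context: $\mathfrak{c}=2^{\aleph_0}$; the axiom of choice is assumed. $\omega$ is the first infinite ordinal. An $n$-ary aggregation function on $[0,1]$ is a function $f\colon[0,1]^n\to[0,1]$ nondecreasing in each coordinate with $f(0,\dots,0)=0$, $f(1,\dots,1)=1$; $\mathsf{Agg}$ is the set of all aggregation functions of all finite arities. For an $\alpha$-ary $f$ and $\beta$-ary functions $g_i$, $i<\alpha$ ($0<\alpha,\beta\le\omega$), the composition $f\circ(g_i:i<\alpha)$ is $\mathbf{x}\mapsto f((g_i(\mathbf{x}))_{i<\alpha})$. A $\sigma$-clone is a set of functions on $[0,1]$ of arities $0<\alpha\le\omega$ containing all projections and closed under such compositions; the $\sigma$-clone generated by $F$ is the smallest one containing $F$. *)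

theory Defs
  imports Complex_Main "HOL-Library.FuncSet" "HOL-Library.Extended_Nat" "HOL-Library.Equipollence"
begin

text \<open>An operation of arity alpha (0 < alpha \<le> omega, omega rendered as \<infinity>) on [0,1] is a pair
  (alpha, f) where f is an extensional function from [0,1]^{i. i < alpha} to [0,1].\<close>

type_synonym op = "enat \<times> ((nat \<Rightarrow> real) \<Rightarrow> real)"

definition ar :: "enat \<Rightarrow> nat set" where
  "ar \<alpha> = {i. enat i < \<alpha>}"

definition Dom :: "enat \<Rightarrow> (nat \<Rightarrow> real) set" where
  "Dom \<alpha> = PiE (ar \<alpha>) (\<lambda>_. {0..1})"

definition Ops :: "op set" where
  "Ops = {(\<alpha>, f). 0 < \<alpha> \<and> f \<in> Dom \<alpha> \<rightarrow>\<^sub>E {0..1}}"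

definition proj :: "enat \<Rightarrow> nat \<Rightarrow> op" where
  "proj \<beta> i = (\<beta>, \<lambda>x\<in>Dom \<beta>. x i)"

definition compose :: "op \<Rightarrow> enat \<Rightarrow> (nat \<Rightarrow> op) \<Rightarrow> op" where
  "compose f \<beta> g = (\<beta>, \<lambda>x\<in>Dom \<beta>. snd f (\<lambda>i\<in>ar (fst f). snd (g i) x))"

definition sigma_clone :: "op set \<Rightarrow> bool" where
  "sigma_clone C \<longleftrightarrow> C \<subseteq> Ops
     \<and> (\<forall>\<beta> i. 0 < \<beta> \<and> i \<in> ar \<beta> \<longrightarrow> proj \<beta> i \<in> C)
     \<and> (\<forall>f \<beta> g. f \<in> C \<and> (\<forall>i\<in>ar (fst f). g i \<in> C \<and> fst (g i) = \<beta>)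
                 \<longrightarrow> compose f \<beta> g \<in> C)"

definition sigma_clone_gen :: "op set \<Rightarrow> op set" where
  "sigma_clone_gen F = \<Inter>{C. sigma_clone C \<and> F \<subseteq> C}"

definition aggregation :: "nat \<Rightarrow> ((nat \<Rightarrow> real) \<Rightarrow> real) \<Rightarrow> bool" where
  "aggregation n f \<longleftrightarrow> f \<in> Dom (enat n) \<rightarrow>\<^sub>E {0..1}
     \<and> (\<forall>x\<in>Dom (enat n). \<forall>y\<in>Dom (enat n). (\<forall>i<n. x i \<le> y i) \<longrightarrow> f x \<le> f y)
     \<and> f (\<lambda>i\<in>ar (enat n). 0) = 0 \<and> f (\<lambda>i\<in>ar (enat n). 1) = 1"

definition Agg :: "op set" where
  "Agg = {(enat n, f) | n f. 0 < n \<and> aggregation n f}"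

end

theory Submission
  imports Defs "HOL-Analysis.Analysis"
begin

datatype 'a tm = V enat nat | L 'a | Cp "'a tm" enat "nat \<Rightarrow> 'a tm"

primrec ev :: "op tm \<Rightarrow> op" where
  "ev (V b i) = proj b i"
| "ev (L f) = f"
| "ev (Cp t b s) = compose (ev t) b (\<lambda>i. ev (s i))"

primrec enc :: "('a \<Rightarrow> nat set) \<Rightarrow> 'a tm \<Rightarrow> nat list \<Rightarrow> nat \<times> enat \<times> nat \<times> nat set" where
  "enc j (V e n) = (\<lambda>p. if p = [] then (1, e, n, {}) else (0, 0, 0, {}))"
| "enc j (L f) = (\<lambda>p. if p = [] then (2, 0, 0, j f) else (0, 0, 0, {}))"
| "enc j (Cp t e s) = (\<lambda>p. case p of [] \<Rightarrow> (3, e, 0, {}) | k # q \<Rightarrow>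
     (case k of 0 \<Rightarrow> enc j t q | Suc m \<Rightarrow> enc j (s m) q))"

lemma enc_inj:
  assumes "inj_on j F"
  shows "set_tm t \<subseteq> F \<Longrightarrow> set_tm t' \<subseteq> F \<Longrightarrow> enc j t = enc j t' \<Longrightarrow> t = t'"
proof (induction t arbitrary: t')
  case (V x1 x2)
  then show ?case by (cases t') (auto dest!: fun_cong[where x="[]"])
next
  case (L x)
  then show ?case using assms by (cases t') (auto dest!: fun_cong[where x="[]"] simp: inj_on_def)
next
  case (Cp t e s)
  then obtain t2 e2 s2 where t': "t' = Cp t2 e2 s2"
    by (cases t') (auto dest!: fun_cong[where x="[]"])
  have E: "enc j (Cp t e s) p = enc j (Cp t2 e2 s2) p" for p
    using Cp.prems(3) t' by simp
  have "e = e2" using E[of "[]"] by simp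
  moreover have "t = t2"
  proof -
    have "enc j t = enc j t2"
    proof
      fix q show "enc j t q = enc j t2 q"
        using E[of "0 # q"] by simp
    qed
    moreover have "set_tm t \<subseteq> F" "set_tm t2 \<subseteq> F" using Cp.prems(1,2) t' by simp_all
    ultimately show ?thesis using Cp.IH(1) by blast
  qed
  moreover have "s = s2"
  proof
    fix m
    have "enc j (s m) = enc j (s2 m)"
    proof
      fix q show "enc j (s m) q = enc j (s2 m) q"
        using E[of "Suc m # q"] by simp
    qed
    moreover have "set_tm (s m) \<subseteq> F" "set_tm (s2 m) \<subseteq> F" using Cp.prems(1,2) t'
      by (simp_all add: UN_subset_iff)
    moreover have "s m \<in> range s" by simp
    ultimately show "s m = s2 m" using Cp.IH(2) by blast
  qed
  ultimately show ?case using t' by simp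
qed

definition code :: "(nat list \<Rightarrow> nat \<times> enat \<times> nat \<times> nat set) \<Rightarrow> (nat list \<times> ((nat \<times> enat \<times> nat) + nat)) set" where
  "code h = {(p, Inl (fst (h p), fst (snd (h p)), fst (snd (snd (h p))))) | p. True}
     \<union> {(p, Inr k) | p k. k \<in> snd (snd (snd (h p)))}"

lemma code_Inl: "(p, Inl x) \<in> code h \<longleftrightarrow> x = (fst (h p), fst (snd (h p)), fst (snd (snd (h p))))"
  unfolding code_def by blast

lemma code_Inr: "(p, Inr k) \<in> code h \<longleftrightarrow> k \<in> snd (snd (snd (h p)))"
  unfolding code_def by blast

lemma code_inj: "inj code"
proof (rule injI)
  fix h h' assume eq: "code h = code h'"
  show "h = h'"
  proof
    fix p
    have "(p, Inl (fst (h p), fst (snd (h p)), fst (snd (snd (h p))))) \<in> code h"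
      by (simp only: code_Inl)
    then have "(p, Inl (fst (h p), fst (snd (h p)), fst (snd (snd (h p))))) \<in> code h'"
      using eq by simp
    then have 1: "(fst (h p), fst (snd (h p)), fst (snd (snd (h p))))
        = (fst (h' p), fst (snd (h' p)), fst (snd (snd (h' p))))"
      by (simp only: code_Inl)
    have 2: "snd (snd (snd (h p))) = snd (snd (snd (h' p)))"
    proof (intro set_eqI)
      fix k
      have "k \<in> snd (snd (snd (h p))) \<longleftrightarrow> (p, Inr k) \<in> code h" by (simp only: code_Inr)
      also have "\<dots> \<longleftrightarrow> (p, Inr k) \<in> code h'" using eq by simp
      also have "\<dots> \<longleftrightarrow> k \<in> snd (snd (snd (h' p)))" by (simp only: code_Inr)
      finally show "k \<in> snd (snd (snd (h p))) \<longleftrightarrow> k \<in> snd (snd (snd (h' p)))" .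
    qed
    show "h p = h' p" using 1 2 by (simp add: prod_eq_iff)
  qed
qed

lemma terms_lepoll:
  fixes j :: "'a \<Rightarrow> nat set"
  assumes "inj_on j F"
  shows "{t. set_tm t \<subseteq> F} \<lesssim> (UNIV :: nat set set)"
proof -
  have "inj_on (\<lambda>t. to_nat ` code (enc j t)) {t. set_tm t \<subseteq> F}"
  proof (rule inj_onI)
    fix t t' assume t: "t \<in> {t. set_tm t \<subseteq> F}" and t': "t' \<in> {t. set_tm t \<subseteq> F}"
      and eq: "to_nat ` code (enc j t) = to_nat ` code (enc j t')"
    have "code (enc j t) = code (enc j t')"
      using eq by (simp add: inj_image_eq_iff[OF inj_to_nat])
    then have "enc j t = enc j t'" using code_inj by (simp add: inj_eq)
    then show "t = t'" using enc_inj[OF assms] t t' by simp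
  qed
  then show ?thesis unfolding lepoll_def by blast
qed

lemma proj_Ops: "0 < b \<Longrightarrow> i \<in> ar b \<Longrightarrow> proj b i \<in> Ops"
  unfolding Ops_def proj_def Dom_def by (auto simp: PiE_iff)

lemma compose_Ops:
  assumes f: "f \<in> Ops" and g: "\<forall>i\<in>ar (fst f). g i \<in> Ops \<and> fst (g i) = b"
  shows "compose f b g \<in> Ops"
proof -
  obtain a h where fa: "f = (a, h)" "0 < a" "h \<in> Dom a \<rightarrow>\<^sub>E {0..1}" using f unfolding Ops_def by auto
  have "0 \<in> ar a" using fa unfolding ar_def by (simp add: zero_enat_def[symmetric])
  then have "g 0 \<in> Ops" "fst (g 0) = b" using g fa by auto
  then have b: "0 < b" unfolding Ops_def by auto
  have gi: "\<And>i x. i \<in> ar a \<Longrightarrow> x \<in> Dom b \<Longrightarrow> snd (g i) x \<in> {0..1}"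
  proof -
    fix i x assume "i \<in> ar a" "x \<in> Dom b"
    then have "g i \<in> Ops" "fst (g i) = b" using g fa by auto
    then show "snd (g i) x \<in> {0..1}" using \<open>x \<in> Dom b\<close> unfolding Ops_def by auto
  qed
  have "(\<lambda>i\<in>ar a. snd (g i) x) \<in> Dom a" if "x \<in> Dom b" for x
    using gi[OF _ that] unfolding Dom_def by auto
  then have "h (\<lambda>i\<in>ar a. snd (g i) x) \<in> {0..1}" if "x \<in> Dom b" for x
    using PiE_mem[OF fa(3)] that by blast
  then have "(\<lambda>x\<in>Dom b. h (\<lambda>i\<in>ar a. snd (g i) x)) \<in> Dom b \<rightarrow>\<^sub>E {0..1}"
    by (simp only: restrict_PiE_iff) blast
  then have "(b, \<lambda>x\<in>Dom b. h (\<lambda>i\<in>ar a. snd (g i) x)) \<in> Ops"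
    using b unfolding Ops_def by simp
  then show ?thesis using fa(1) unfolding compose_def by simp
qed

lemma gen_sub:
  assumes "F \<subseteq> Ops"
  shows "sigma_clone_gen F \<subseteq> {h \<in> Ops. \<exists>t. set_tm t \<subseteq> F \<and> ev t = h}" (is "_ \<subseteq> ?C")
proof -
  have "sigma_clone ?C"
    unfolding sigma_clone_def
  proof (intro conjI allI impI)
    show "?C \<subseteq> Ops" by blast
  next
    fix b i assume "0 < b \<and> i \<in> ar b"
    then have "proj b i \<in> Ops" using proj_Ops by blast
    moreover have "set_tm (V b i :: op tm) \<subseteq> F \<and> ev (V b i) = proj b i" by simp
    ultimately show "proj b i \<in> ?C" by blast
  next
    fix f b g assume a: "f \<in> ?C \<and> (\<forall>i\<in>ar (fst f). g i \<in> ?C \<and> fst (g i) = b)"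
    then obtain t where t: "set_tm t \<subseteq> F" "ev t = f" by blast
    define s where "s i = (if i \<in> ar (fst f) then (SOME u. set_tm u \<subseteq> F \<and> ev u = g i) else V 1 0)" for i
    have s: "set_tm (s i) \<subseteq> F \<and> (i \<in> ar (fst f) \<longrightarrow> ev (s i) = g i)" for i
    proof (cases "i \<in> ar (fst f)")
      case True
      then have "\<exists>u. set_tm u \<subseteq> F \<and> ev u = g i" using a by blast
      then have "(\<lambda>u. set_tm u \<subseteq> F \<and> ev u = g i) (SOME u. set_tm u \<subseteq> F \<and> ev u = g i)"
        by (rule someI_ex)
      then have "set_tm (s i) \<subseteq> F \<and> ev (s i) = g i" using True unfolding s_def
        by simp
      then show ?thesis by blast
    qed (simp add: s_def)
    have eqx: "(\<lambda>i\<in>ar (fst f). snd (ev (s i)) x) = (\<lambda>i\<in>ar (fst f). snd (g i) x)" for x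
    proof (rule restrict_ext)
      fix i assume "i \<in> ar (fst f)"
      then have "ev (s i) = g i" using s by blast
      then show "snd (ev (s i)) x = snd (g i) x" by (rule arg_cong)
    qed
    have "(\<lambda>x\<in>Dom b. snd f (\<lambda>i\<in>ar (fst f). snd (ev (s i)) x))
        = (\<lambda>x\<in>Dom b. snd f (\<lambda>i\<in>ar (fst f). snd (g i) x))"
      by (simp only: eqx)
    then have c: "compose f b (\<lambda>i. ev (s i)) = compose f b g"
      unfolding compose_def by (rule arg_cong)
    have "ev (Cp t b s) = compose (ev t) b (\<lambda>i. ev (s i))" by (rule ev.simps(3))
    then have "ev (Cp t b s) = compose f b g" using c t(2) by simp
    then have eqc: "compose f b g = ev (Cp t b s)" by (rule sym)
    have opsc: "compose f b g \<in> Ops"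
    proof (rule compose_Ops)
      show "f \<in> Ops" using a by simp
      show "\<forall>i\<in>ar (fst f). g i \<in> Ops \<and> fst (g i) = b" using a by simp
    qed
    have setc: "set_tm (Cp t b s) \<subseteq> F" using t s by (simp add: UN_subset_iff)
    have "\<exists>u. set_tm u \<subseteq> F \<and> ev u = compose f b g"
      using setc eqc by (intro exI[of _ "Cp t b s"]) simp
    then show "compose f b g \<in> ?C" using opsc by simp
  qed
  moreover have "F \<subseteq> ?C"
  proof
    fix f assume fF: "f \<in> F"
    have "\<exists>u. set_tm u \<subseteq> F \<and> ev u = f" using fF by (intro exI[of _ "L f"]) simp
    moreover have "f \<in> Ops" using subsetD[OF assms fF] .
    ultimately show "f \<in> ?C" by simp
  qed
  ultimately have "?C \<in> {C. sigma_clone C \<and> F \<subseteq> C}" by (intro CollectI conjI)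
  then show ?thesis unfolding sigma_clone_gen_def by (rule Inter_lower)
qed

lemma ar_enat: "ar (enat n) = {..<n}"
  by (auto simp: ar_def)

definition gS :: "real set \<Rightarrow> real \<Rightarrow> real \<Rightarrow> real" where
  "gS S a c = (if a + c < 1 then 0 else if a + c > 1 then 1 else if a \<in> S then 2/3 else 1/3)"

definition agf :: "real set \<Rightarrow> (nat \<Rightarrow> real) \<Rightarrow> real" where
  "agf S = (\<lambda>z\<in>Dom (enat 2). gS S (z 0) (z 1))"

lemma gS_range: "gS S a c \<in> {0..1}"
  unfolding gS_def by auto

lemma gS_mono: "a \<le> a' \<Longrightarrow> c \<le> c' \<Longrightarrow> gS S a c \<le> gS S a' c'"
proof -
  assume "a \<le> a'" "c \<le> c'"
  then show ?thesis unfolding gS_def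
    by (cases "a + c < 1"; cases "a + c > 1"; cases "a' + c' > 1"; cases "a = a'") auto
qed

lemma agf_agg: "aggregation 2 (agf S)"
  unfolding aggregation_def
proof (intro conjI ballI impI)
  show "agf S \<in> Dom (enat 2) \<rightarrow>\<^sub>E {0..1}"
    unfolding agf_def using gS_range by auto
next
  fix x y assume x: "x \<in> Dom (enat 2)" and y: "y \<in> Dom (enat 2)" and le: "\<forall>i<2. x i \<le> y i"
  then show "agf S x \<le> agf S y"
    unfolding agf_def using gS_mono[of "x 0" "y 0" "x 1" "y 1" S] le by simp
next
  have "(\<lambda>i\<in>ar (enat 2). 0::real) \<in> Dom (enat 2)" unfolding Dom_def by auto
  then show "agf S (\<lambda>i\<in>ar (enat 2). 0) = 0" unfolding agf_def gS_def by (simp add: ar_enat)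
next
  have "(\<lambda>i\<in>ar (enat 2). 1::real) \<in> Dom (enat 2)" unfolding Dom_def by auto
  then show "agf S (\<lambda>i\<in>ar (enat 2). 1) = 1" unfolding agf_def gS_def by (simp add: ar_enat)
qed

lemma agf_inj: "inj_on agf (Pow {0..<1})"
proof (rule inj_onI)
  fix S S' assume S: "S \<in> Pow {0..<1::real}" and S': "S' \<in> Pow {0..<1::real}" and eq: "agf S = agf S'"
  show "S = S'"
  proof (intro set_eqI)
    fix a
    show "a \<in> S \<longleftrightarrow> a \<in> S'"
    proof (cases "a \<in> {0..<1}")
      case True
      define z where "z = (\<lambda>i\<in>ar (enat 2). if i = 0 then a else 1 - a)"
      have zD: "z \<in> Dom (enat 2)" using True unfolding z_def Dom_def by (auto simp: ar_enat)
      have "z 0 = a" "z 1 = 1 - a" unfolding z_def by (auto simp: ar_enat)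
      then have "gS S a (1 - a) = gS S' a (1 - a)"
        using fun_cong[OF eq, of z] zD unfolding agf_def by simp
      then show ?thesis unfolding gS_def by (auto split: if_splits)
    next
      case False
      then show ?thesis using S S' by auto
    qed
  qed
qed

lemma Pow_lepoll_Agg: "Pow {0..<1::real} \<lesssim> Agg"
  unfolding lepoll_def
proof (intro exI conjI)
  show "inj_on (\<lambda>S. (enat 2, agf S)) (Pow {0..<1::real})"
    using agf_inj by (auto simp: inj_on_def)
  show "(\<lambda>S. (enat 2, agf S)) ` Pow {0..<1::real} \<subseteq> Agg"
    unfolding Agg_def using agf_agg by fastforce
qed

theorem corollary2:
  fixes F :: "op set"
  assumes "F \<subseteq> Ops"
    and "F \<lesssim> (UNIV :: real set)"
  shows "\<not> Agg \<subseteq> sigma_clone_gen F"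
proof
  assume sub: "Agg \<subseteq> sigma_clone_gen F"
  have "(UNIV :: real set) \<lesssim> (UNIV :: nat set set)"
    using eqpoll_imp_lepoll eqpoll_sym nat_sets_eqpoll_reals by blast
  then have "F \<lesssim> (UNIV :: nat set set)" using lepoll_trans[OF assms(2)] by blast
  then obtain j :: "op \<Rightarrow> nat set" where j: "inj_on j F" unfolding lepoll_def by blast
  let ?T = "{t. set_tm t \<subseteq> F}"
  have "sigma_clone_gen F \<subseteq> ev ` ?T" using gen_sub[OF assms(1)] by blast
  then have "sigma_clone_gen F \<lesssim> ev ` ?T" by (rule subset_imp_lepoll)
  also have "ev ` ?T \<lesssim> ?T" by (rule image_lepoll)
  also have "?T \<lesssim> (UNIV :: nat set set)" using terms_lepoll[OF j] .
  also have "\<dots> \<lesssim> {0..<1::real}" by (rule nat_sets_lepoll_reals01)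
  finally have "sigma_clone_gen F \<lesssim> {0..<1::real}" .
  have "Pow {0..<1::real} \<lesssim> Agg" by (rule Pow_lepoll_Agg)
  also have "Agg \<lesssim> sigma_clone_gen F" by (rule subset_imp_lepoll[OF sub])
  also have "sigma_clone_gen F \<lesssim> {0..<1::real}" by fact
  finally have P: "Pow {0..<1::real} \<lesssim> {0..<1::real}" .
  have "{0..<1::real} \<lesssim> Pow {0..<1::real}" "\<not> {0..<1::real} \<approx> Pow {0..<1::real}"
    using lesspoll_Pow_self[of "{0..<1::real}"] unfolding lesspoll_def by auto
  then show False using lepoll_antisym[OF _ P] by blast
qed

end
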